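(* Let $1\le n\le m$ be integers and let $U=(U_{j,k})_{j,k=1}^m$ be an $m\times m$ unitary matrix. Let $U^{n\times n}=(U_{j,k})_{j,k=1}^n$ denote its upper-left $n\times n$ submatrix. Then $$\left(\frac{2}{\pi}\right)^m \int_{\mathbb{C}^m} e^{-2|\vec\alpha|^2}\prod_{j=1}^n\left(4\left|\sum_{k=1}^m \alpha_k U_{k,j}\right|^2-1\right)\prod_{j=1}^n\left(|\alpha_j|^2-\frac12\right)\,d^2\vec\alpha \;=\;\left|\mathrm{perm}\big(U^{n\times n}\big)\right|^2 .$$ (In particular, since computing permanents is $\#\mathbf{P}$-hard in the worst case, exactly evaluating integrals of this form is $\#\mathbf{P}$-hard in the worst case.)
   Context: Here $\vec\alpha=(\alpha_1,\dots,\alpha_m)\in\mathbb{C}^m$, $|\vec\alpha|^2=\sum_{k=1}^m|\alpha_k|^2$, and $d^2\vec\alpha=d^2\alpha_1\cdots d^2\alpha_m$ where $d^2\alpha=d(\mathrm{Re}\,\alpha)\,d(\mathrm{Im}\,\alpha)$ is Lebesgue measure on $\mathbb{C}\cong\mathbb{R}^2$. The permanent of an $n\times n$ matrix $A$ is $\mathrm{perm}(A)=\sum_{\sigma\in S_n}\prod_{j=1}^n A_{j,\sigma(j)}$. *)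

theory Defs
  imports "HOL-Analysis.Analysis"
begin

definition unitary_mat :: "nat \<Rightarrow> (nat \<Rightarrow> nat \<Rightarrow> complex) \<Rightarrow> bool" where
  "unitary_mat m U \<longleftrightarrow>
     (\<forall>j\<in>{1..m}. \<forall>l\<in>{1..m}. (\<Sum>k=1..m. U j k * cnj (U l k)) = (if j = l then 1 else 0)) \<and>
     (\<forall>j\<in>{1..m}. \<forall>l\<in>{1..m}. (\<Sum>k=1..m. cnj (U k j) * U k l) = (if j = l then 1 else 0))"

definition perm_sub :: "nat \<Rightarrow> (nat \<Rightarrow> nat \<Rightarrow> complex) \<Rightarrow> complex" where
  "perm_sub n A = (\<Sum>\<sigma> \<in> {\<sigma>. \<sigma> permutes {1..n}}. \<Prod>j=1..n. A j (\<sigma> j))"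

end

theory Submission
  imports Defs "HOL-Probability.Distributions"
begin


definition nd :: "real \<Rightarrow> real" where "nd = normal_density 0 (1/2)"
definition rmom :: "nat \<Rightarrow> real" where
  "rmom p = (if even p then fact p / (8 ^ (p div 2) * fact (p div 2)) else 0)"

lemma nd_moment: "has_bochner_integral lborel (\<lambda>x. nd x * x^p) (rmom p)"
proof (cases "even p")
  case True
  then obtain k where k: "p = 2*k" by (auto elim: evenE)
  have "has_bochner_integral lborel (\<lambda>x. normal_density 0 (1/2) x * (x - 0) ^ (2 * k)) (fact (2 * k) / ((2 / (1/2)\<^sup>2)^k * fact k))"
    by (rule normal_moment_even) simp
  then show ?thesis using k by (simp add: nd_def rmom_def power2_eq_square)
next
  case False
  then obtain k where k: "p = 2*k+1" by (auto elim: oddE)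
  have "has_bochner_integral lborel (\<lambda>x. normal_density 0 (1/2) x * (x - 0) ^ (2 * k+1)) 0"
    by (rule normal_moment_odd) simp
  then show ?thesis using k by (simp add: nd_def rmom_def)
qed

lemma psf: "product_sigma_finite (\<lambda>_. lborel)"
  unfolding product_sigma_finite_def by (simp add: lborel.sigma_finite_measure_axioms)

lemma Basis_sum_complex: "(\<Sum>b\<in>(Basis::complex set). f b *\<^sub>R b) = Complex (f 1) (f \<i>)"
  by (simp add: Basis_complex_def complex_eq_iff)

lemma lborel_complex: "(lborel :: complex measure) = distr (\<Pi>\<^sub>M b\<in>Basis. lborel) borel (\<lambda>f. Complex (f 1) (f \<i>))"
  by (subst lborel_eq) (simp add: Basis_sum_complex)

lemma measurable_eC[measurable]: "(\<lambda>f. Complex (f 1) (f \<i>)) \<in> measurable (\<Pi>\<^sub>M b\<in>(Basis::complex set). (lborel::real measure)) borel"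
proof -
  have "(\<lambda>f. \<Sum>b\<in>(Basis::complex set). f b *\<^sub>R b) \<in> measurable (\<Pi>\<^sub>M b\<in>(Basis::complex set). (lborel::real measure)) borel"
    by measurable
  then show ?thesis by (simp add: Basis_sum_complex)
qed

lemma complex_transfer:
  fixes f :: "complex \<Rightarrow> complex"
  assumes [measurable]: "f \<in> borel_measurable borel"
  shows "integrable lborel f \<longleftrightarrow> integrable (\<Pi>\<^sub>M b\<in>Basis. lborel) (\<lambda>x. f (Complex (x 1) (x \<i>)))"
    and "integral\<^sup>L lborel f = integral\<^sup>L (\<Pi>\<^sub>M b\<in>Basis. lborel) (\<lambda>x. f (Complex (x 1) (x \<i>)))"
  by (subst lborel_complex, rule integrable_distr_eq; measurable)
     (subst lborel_complex, rule integral_distr; measurable)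

lemma mono2:
  "has_bochner_integral (\<Pi>\<^sub>M b\<in>(Basis::complex set). lborel)
     (\<lambda>x. complex_of_real (nd (x 1) * x 1 ^ p) * complex_of_real (nd (x \<i>) * x \<i> ^ q))
     (complex_of_real (rmom p * rmom q))"
proof -
  interpret product_sigma_finite "\<lambda>_. lborel" by (rule psf)
  define f where "f b = (\<lambda>t. complex_of_real (nd t * t ^ (if b = 1 then p else q)))" for b :: complex
  have int: "integrable lborel (f b)" for b
    unfolding f_def by (intro integrable_of_real integrable.intros[OF nd_moment])
  have e: "(\<lambda>x. \<Prod>b\<in>Basis. f b (x b)) = (\<lambda>x. complex_of_real (nd (x 1) * x 1 ^ p) * complex_of_real (nd (x \<i>) * x \<i> ^ q))"
    by (simp add: Basis_complex_def f_def)
  have i1: "integrable (\<Pi>\<^sub>M b\<in>Basis. lborel) (\<lambda>x. \<Prod>b\<in>Basis. f b (x b))"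
    by (rule product_integrable_prod) (auto simp: int)
  have i2: "integral\<^sup>L (\<Pi>\<^sub>M b\<in>Basis. lborel) (\<lambda>x. \<Prod>b\<in>Basis. f b (x b)) = (\<Prod>b\<in>Basis. integral\<^sup>L lborel (f b))"
    by (rule product_integral_prod) (auto simp: int)
  have v: "integral\<^sup>L lborel (f b) = complex_of_real (rmom (if b = 1 then p else q))" for b
    unfolding f_def integral_complex_of_real using nd_moment has_bochner_integral_integral_eq by metis
  show ?thesis using i1 i2 unfolding e
    by (simp add: has_bochner_integral_iff v Basis_complex_def)
qed

abbreviation PM :: "(complex \<Rightarrow> real) measure" where "PM \<equiv> (\<Pi>\<^sub>M b\<in>(Basis::complex set). (lborel::real measure))"
definition G :: "(complex \<Rightarrow> real) \<Rightarrow> complex" where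
  "G x = complex_of_real (nd (x 1)) * complex_of_real (nd (x \<i>))"

lemma mono2': "has_bochner_integral PM (\<lambda>x. G x * (of_real (x 1))^p * (of_real (x \<i>))^q) (of_real (rmom p * rmom q))"
  using mono2[of p q] by (simp add: G_def mult_ac)

lemma lin_pow: "has_bochner_integral PM (\<lambda>x. G x * (c1 * of_real (x 1) + c2 * of_real (x \<i>))^N)
   (\<Sum>r\<le>N. of_nat (N choose r) * c1^r * c2^(N-r) * of_real (rmom r * rmom (N - r)))"
proof -
  have "has_bochner_integral PM (\<lambda>x. \<Sum>r\<le>N. (of_nat (N choose r) * c1^r * c2^(N-r)) * (G x * (of_real (x 1))^r * (of_real (x \<i>))^(N-r)))
   (\<Sum>r\<le>N. (of_nat (N choose r) * c1^r * c2^(N-r)) * of_real (rmom r * rmom (N - r)))"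
    by (intro has_bochner_integral_sum has_bochner_integral_mult_right mono2')
  moreover have "(\<lambda>x. \<Sum>r\<le>N. (of_nat (N choose r) * c1^r * c2^(N-r)) * (G x * (of_real (x 1))^r * (of_real (x \<i>))^(N-r)))
     = (\<lambda>x. G x * (c1 * of_real (x 1) + c2 * of_real (x \<i>))^N)"
    by (simp add: binomial_ring sum_distrib_left power_mult_distrib mult_ac)
  ultimately show ?thesis by simp
qed

lemma rmom_odd: "odd p \<Longrightarrow> rmom p = 0" by (simp add: rmom_def)

lemma comb_identity:
  fixes c1 c2 :: complex
  shows "(\<Sum>r\<le>N. of_nat (N choose r) * c1^r * c2^(N-r) * of_real (rmom r * rmom (N - r)))
     = (if even N then of_real (rmom N) * (c1\<^sup>2 + c2\<^sup>2)^(N div 2) else 0)"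
proof (cases "even N")
  case False
  have "rmom r * rmom (N - r) = 0" if "r \<le> N" for r
    using False that by (cases "even r") (auto simp: rmom_odd)
  then have "\<forall>r\<in>{..N}. of_nat (N choose r) * c1^r * c2^(N-r) * complex_of_real (rmom r * rmom (N - r)) = 0"
    by (metis atMost_iff mult_zero_right of_real_0)
  then show ?thesis using False by (simp only: sum.neutral) simp
next
  case True
  then obtain K where K: "N = 2*K" by (auto elim: evenE)
  define f where "f r = of_nat (N choose r) * c1^r * c2^(N-r) * complex_of_real (rmom r * rmom (N - r))" for r
  have "(\<Sum>r\<le>N. f r) = (\<Sum>r\<in>(\<lambda>i. 2*i) ` {..K}. f r)"
  proof (rule sum.mono_neutral_right)
    show "(\<lambda>i. 2*i) ` {..K} \<subseteq> {..N}" using K by auto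
    show "\<forall>r\<in>{..N} - (\<lambda>i. 2*i) ` {..K}. f r = 0"
    proof
      fix r assume r: "r \<in> {..N} - (\<lambda>i. 2*i) ` {..K}"
      then have "odd r" using K by (auto elim!: evenE)
      then show "f r = 0" by (simp add: f_def rmom_odd)
    qed
  qed auto
  also have "\<dots> = (\<Sum>i\<le>K. f (2*i))"
    by (subst sum.reindex) (auto simp: inj_on_def)
  also have "\<dots> = (\<Sum>i\<le>K. of_real (rmom N) * (of_nat (K choose i) * (c1\<^sup>2)^i * (c2\<^sup>2)^(K-i)))"
  proof (rule sum.cong[OF refl])
    fix i assume i: "i \<in> {..K}"
    then have iK: "i \<le> K" by simp
    have e1: "N - 2*i = 2*(K-i)" using K iK by simp
    have e2: "K * 2 - i * 2 = (K-i)*2" using iK by simp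
    have r: "rmom (2*i) * rmom (2*(K-i)) * real (N choose (2*i)) = rmom N * real (K choose i)"
      using iK K
      by (simp add: rmom_def binomial_fact e1 e2 field_simps power_add[symmetric])
    have "f (2*i) = complex_of_real (rmom (2*i) * rmom (2*(K-i)) * real (N choose (2*i))) * (c1\<^sup>2)^i * (c2\<^sup>2)^(K-i)"
      unfolding f_def e1 power_mult by (simp add: mult_ac)
    also have "\<dots> = of_real (rmom N) * (of_nat (K choose i) * (c1\<^sup>2)^i * (c2\<^sup>2)^(K-i))"
      unfolding r by simp
    finally show "f (2*i) = of_real (rmom N) * (of_nat (K choose i) * (c1\<^sup>2)^i * (c2\<^sup>2)^(K-i))" .
  qed
  also have "\<dots> = of_real (rmom N) * (c1\<^sup>2 + c2\<^sup>2)^K"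
    by (simp add: binomial_ring sum_distrib_left)
  finally show ?thesis using True K by (simp add: f_def)
qed



abbreviation zz :: "(complex \<Rightarrow> real) \<Rightarrow> complex" where "zz x \<equiv> Complex (x 1) (x \<i>)"

lemma zz_eq: "zz x = of_real (x 1) + \<i> * of_real (x \<i>)" by (simp add: complex_eq_iff)
lemma cnj_zz_eq: "cnj (zz x) = of_real (x 1) + (- \<i>) * of_real (x \<i>)" by (simp add: complex_eq_iff)

lemma mono_expand: "G x * zz x ^ a * cnj (zz x) ^ b =
  (\<Sum>r\<le>a. \<Sum>t\<le>b. (of_nat (a choose r) * of_nat (b choose t) * \<i>^(a-r) * (-\<i>)^(b-t)) *
      (G x * of_real (x 1)^(r+t) * of_real (x \<i>)^((a-r)+(b-t))))"
proof -
  have H: "zz x ^ a * cnj (zz x) ^ b = (\<Sum>r\<le>a. of_nat (a choose r) * of_real (x 1)^r * (\<i> * of_real (x \<i>))^(a-r))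
     * (\<Sum>t\<le>b. of_nat (b choose t) * of_real (x 1)^t * ((-\<i>) * of_real (x \<i>))^(b-t))"
    by (simp only: cnj_zz_eq) (simp only: zz_eq binomial_ring)
  have "G x * zz x ^ a * cnj (zz x) ^ b = (\<Sum>r\<le>a. \<Sum>t\<le>b. G x * ((of_nat (a choose r) * of_real (x 1)^r * (\<i> * of_real (x \<i>))^(a-r))
     * (of_nat (b choose t) * of_real (x 1)^t * ((-\<i>) * of_real (x \<i>))^(b-t))))"
    unfolding mult.assoc[of "G x"] H by (simp only: sum_product) (simp only: sum_distrib_left)
  also have "\<dots> = (\<Sum>r\<le>a. \<Sum>t\<le>b. (of_nat (a choose r) * of_nat (b choose t) * \<i>^(a-r) * (-\<i>)^(b-t)) *
      (G x * of_real (x 1)^(r+t) * of_real (x \<i>)^((a-r)+(b-t))))"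
    by (intro sum.cong refl) (simp only: power_mult_distrib power_add mult_ac)
  finally show ?thesis .
qed

lemma mono_int: "integrable PM (\<lambda>x. G x * zz x ^ a * cnj (zz x) ^ b)"
  unfolding mono_expand
  apply (rule Bochner_Integration.integrable_sum)+
  apply (rule integrable_mult_right)
  apply (rule integrable.intros[OF mono2'])
  done

definition Mm :: "nat \<Rightarrow> nat \<Rightarrow> complex" where
  "Mm a b = integral\<^sup>L PM (\<lambda>x. G x * zz x ^ a * cnj (zz x) ^ b)"

lemma strick: "(\<Sum>a\<le>N. (of_nat (N choose a) * Mm a (N-a)) * s^a) =
   (if even N then of_real (rmom N) * 4^(N div 2) else 0) * s^(N div 2)"
proof -
  have "integral\<^sup>L PM (\<lambda>x. G x * (s * zz x + cnj (zz x))^N)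
     = integral\<^sup>L PM (\<lambda>x. \<Sum>a\<le>N. (of_nat (N choose a) * s^a) * (G x * zz x ^ a * cnj (zz x) ^ (N-a)))"
  proof (rule Bochner_Integration.integral_cong[OF refl])
    fix x
    show "G x * (s * zz x + cnj (zz x))^N = (\<Sum>a\<le>N. (of_nat (N choose a) * s^a) * (G x * zz x ^ a * cnj (zz x) ^ (N-a)))"
      unfolding binomial_ring sum_distrib_left
      by (intro sum.cong refl) (simp only: power_mult_distrib mult_ac)
  qed
  also have "\<dots> = (\<Sum>a\<le>N. (of_nat (N choose a) * s^a) * Mm a (N-a))"
    unfolding Mm_def
    by (subst Bochner_Integration.integral_sum) (auto intro: mono_int simp only: integral_mult_right_zero)
  also have "\<dots> = (\<Sum>a\<le>N. (of_nat (N choose a) * Mm a (N-a)) * s^a)"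
    by (simp only: mult_ac)
  finally have 1: "integral\<^sup>L PM (\<lambda>x. G x * (s * zz x + cnj (zz x))^N) = (\<Sum>a\<le>N. (of_nat (N choose a) * Mm a (N-a)) * s^a)" .
  have inner: "s * zz x + cnj (zz x) = (s+1) * of_real (x 1) + (\<i>*(s-1)) * of_real (x \<i>)" for x
    unfolding cnj_zz_eq unfolding zz_eq by (simp add: algebra_simps)
  have "integral\<^sup>L PM (\<lambda>x. G x * (s * zz x + cnj (zz x))^N) = integral\<^sup>L PM (\<lambda>x. G x * ((s+1) * of_real (x 1) + (\<i>*(s-1)) * of_real (x \<i>))^N)"
    by (simp only: inner)
  also have "\<dots> = (\<Sum>r\<le>N. of_nat (N choose r) * (s+1)^r * (\<i>*(s-1))^(N-r) * of_real (rmom r * rmom (N - r)))"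
    by (rule has_bochner_integral_integral_eq[OF lin_pow])
  also have "\<dots> = (if even N then of_real (rmom N) * ((s+1)\<^sup>2 + (\<i>*(s-1))\<^sup>2)^(N div 2) else 0)"
    by (rule comb_identity)
  also have "(s+1)\<^sup>2 + (\<i>*(s-1))\<^sup>2 = 4 * s"
    by (simp add: power2_eq_square algebra_simps)
  also have "(if even N then of_real (rmom N) * (4 * s)^(N div 2) else 0) = (if even N then of_real (rmom N) * 4^(N div 2) else 0) * s^(N div 2)"
    by (simp add: power_mult_distrib)
  finally show ?thesis using 1 by simp
qed


lemma Mm_val: "Mm a b = (if a = b then of_real (fact a / 2^a) else 0)"
proof -
  define N where "N = a + b"
  define d :: complex where "d = (if even N then of_real (rmom N) * 4^(N div 2) else 0)"
  define c where "c k = of_nat (N choose k) * Mm k (N-k) - (if k = N div 2 then d else 0)" for k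
  have "(\<Sum>k\<le>N. c k * s^k) = 0" for s
  proof -
    have e: "(if k = N div 2 then d else 0) * s^k = (if k = N div 2 then d * s^(N div 2) else 0)" for k
      by auto
    have 2: "(\<Sum>k\<le>N. (if k = N div 2 then d else 0) * s^k) = d * s^(N div 2)"
      unfolding e by (subst sum.delta) auto
    have "(\<Sum>k\<le>N. c k * s^k) = (\<Sum>k\<le>N. (of_nat (N choose k) * Mm k (N-k)) * s^k) - (\<Sum>k\<le>N. (if k = N div 2 then d else 0) * s^k)"
      unfolding c_def left_diff_distrib by (rule sum_subtractf)
    also have "\<dots> = 0" unfolding 2 strick by (simp add: d_def)
    finally show ?thesis .
  qed
  then have "c a = 0" using polyfun_eq_0[of c N] N_def by auto
  then have ca: "of_nat (N choose a) * Mm a b = (if a = N div 2 then d else 0)"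
    by (simp add: c_def N_def)
  have Cnz: "(of_nat (N choose a) :: complex) \<noteq> 0" using N_def by simp
  show ?thesis
  proof (cases "a = b")
    case True
    then have N: "N = 2*a" by (simp add: N_def)
    have "of_nat (N choose a) * Mm a b = of_real (rmom (2*a)) * 4^a" using ca N by (simp add: d_def)
    then have "Mm a b = of_real (rmom (2*a)) * 4^a / of_nat (N choose a)" using Cnz by (simp add: field_simps)
    also have "\<dots> = of_real (rmom (2*a) * 4^a / real (N choose a))" by simp
    also have "rmom (2*a) * 4^a / real (N choose a) = fact a / 2^a"
    proof -
      have e1: "real (N choose a) = fact (2*a) / (fact a * fact a)" unfolding N by (simp add: binomial_fact)
      have e2: "rmom (2*a) * 4^a = fact (2*a) / (2^a * fact a)"
      proof -
        have "(8::real)^a = 4^a * 2^a" by (simp flip: power_mult_distrib)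
        then show ?thesis by (simp add: rmom_def)
      qed
      have "fact (2*a) \<noteq> (0::real)" "fact a \<noteq> (0::real)" by auto
      then show ?thesis unfolding e1 e2 by (simp add: field_simps)
    qed
    finally show ?thesis using True by simp
  next
    case False
    have "a = N div 2 \<Longrightarrow> odd N" using False N_def by presburger
    then have "(if a = N div 2 then d else 0) = 0"
      by (auto simp: d_def)
    then show ?thesis using ca Cnz False by simp
  qed
qed


definition wt :: "complex \<Rightarrow> complex" where
  "wt z = complex_of_real ((2/pi) * exp (-2 * (cmod z)\<^sup>2))"

lemma G_eq: "G x = wt (zz x)"
proof -
  have s: "sqrt (2 * pi * (1/2)\<^sup>2) * sqrt (2 * pi * (1/2)\<^sup>2) = pi / 2"
    by (simp add: power2_eq_square)
  have "nd (x 1) * nd (x \<i>) = (1 / (sqrt (2 * pi * (1/2)\<^sup>2) * sqrt (2 * pi * (1/2)\<^sup>2))) * exp (-2 * ((x 1)\<^sup>2 + (x \<i>)\<^sup>2))"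
    by (simp add: nd_def normal_density_def exp_add[symmetric] power2_eq_square field_simps)
  also have "\<dots> = (2/pi) * exp (-2 * (cmod (zz x))\<^sup>2)"
    unfolding s by (simp add: cmod_def)
  finally show ?thesis unfolding G_def wt_def by (simp only: of_real_mult[symmetric])
qed

lemma cnj_meas[measurable]: "cnj \<in> borel_measurable borel"
  by (rule borel_measurable_continuous_onI) (intro continuous_intros)

lemma wt_meas[measurable]: "wt \<in> borel_measurable borel"
  unfolding wt_def by measurable

lemma mom1:
  "integrable lborel (\<lambda>z. wt z * z^a * cnj z^b)"
  "integral\<^sup>L lborel (\<lambda>z. wt z * z^a * cnj z^b) = (if a = b then of_real (fact a / 2^a) else 0)"
proof -
  have m: "(\<lambda>z. wt z * z^a * cnj z^b) \<in> borel_measurable borel" by measurable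
  show "integrable lborel (\<lambda>z. wt z * z^a * cnj z^b)"
    unfolding complex_transfer(1)[OF m] G_eq[symmetric] by (rule mono_int)
  show "integral\<^sup>L lborel (\<lambda>z. wt z * z^a * cnj z^b) = (if a = b then of_real (fact a / 2^a) else 0)"
    unfolding complex_transfer(2)[OF m] G_eq[symmetric] Mm_def[symmetric] by (rule Mm_val)
qed

definition hfun :: "nat \<Rightarrow> nat \<Rightarrow> bool \<Rightarrow> complex \<Rightarrow> complex" where
  "hfun A B c z = wt z * z^A * cnj z^B * (if c then z * cnj z - 1/2 else 1)"

definition ev :: "nat \<Rightarrow> nat \<Rightarrow> bool \<Rightarrow> complex" where
  "ev A B c = (if A = B then (if c then of_real (real A * fact A / 2^(A+1)) else of_real (fact A / 2^A)) else 0)"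

lemma hfun_int: "integrable lborel (hfun A B c)"
proof (cases c)
  case True
  have e: "hfun A B c = (\<lambda>z. wt z * z^(A+1) * cnj z^(B+1) - (1/2) * (wt z * z^A * cnj z^B))"
    using True by (auto simp: hfun_def fun_eq_iff algebra_simps)
  show ?thesis unfolding e
    by (intro Bochner_Integration.integrable_diff integrable_mult_right mom1(1))
next
  case False
  have e: "hfun A B c = (\<lambda>z. wt z * z^A * cnj z^B)"
    using False by (auto simp: hfun_def fun_eq_iff)
  show ?thesis unfolding e by (rule mom1(1))
qed

lemma hfun_integral: "integral\<^sup>L lborel (hfun A B c) = ev A B c"
proof (cases c)
  case True
  have e: "hfun A B c = (\<lambda>z. wt z * z^(A+1) * cnj z^(B+1) - (1/2) * (wt z * z^A * cnj z^B))"
    using True by (auto simp: hfun_def fun_eq_iff algebra_simps)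
  have "integral\<^sup>L lborel (hfun A B c) = (if A+1 = B+1 then of_real (fact (A+1) / 2^(A+1)) else 0) - (1/2) * (if A = B then of_real (fact A / 2^A) else 0)"
  proof -
    have "integral\<^sup>L lborel (hfun A B c) = integral\<^sup>L lborel (\<lambda>z. wt z * z^(A+1) * cnj z^(B+1)) - integral\<^sup>L lborel (\<lambda>z. (1/2) * (wt z * z^A * cnj z^B))"
      unfolding e by (intro Bochner_Integration.integral_diff integrable_mult_right mom1(1))
    then show ?thesis by (simp only: integral_mult_right_zero mom1(2))
  qed
  also have "\<dots> = ev A B c"
    using True by (auto simp: ev_def field_simps)
  finally show ?thesis .
next
  case False
  have e: "hfun A B c = (\<lambda>z. wt z * z^A * cnj z^B)"
    using False by (auto simp: hfun_def fun_eq_iff)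
  show ?thesis
    unfolding e mom1(2) using False by (simp add: ev_def)
qed



definition fibc :: "(nat \<Rightarrow> nat) \<Rightarrow> nat set \<Rightarrow> nat \<Rightarrow> nat" where
  "fibc f S k = card {j\<in>S. f j = k}"

lemma fib_sum:
  assumes "finite S" "finite K" "f ` S \<subseteq> K"
  shows "(\<Sum>k\<in>K. fibc f S k) = card S"
  using sum.group[OF assms, of "\<lambda>_. 1::nat"] by (simp add: fibc_def)

lemma key:
  assumes JK: "J \<subseteq> K" and fK: "finite K" and SJ: "S \<subseteq> J" and fS: "f ` S \<subseteq> K"
    and ge: "\<forall>k\<in>J. fibc f S k \<ge> 1"
  shows "S = J" "\<forall>k\<in>J. fibc f S k = 1" "\<forall>k\<in>K-J. fibc f S k = 0"
proof -
  have fJ: "finite J" using JK fK finite_subset by blast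
  have fSS: "finite S" using SJ fJ finite_subset by blast
  have tot: "(\<Sum>k\<in>K. fibc f S k) = card S" by (rule fib_sum[OF fSS fK fS])
  have split: "(\<Sum>k\<in>K. fibc f S k) = (\<Sum>k\<in>J. fibc f S k) + (\<Sum>k\<in>K-J. fibc f S k)"
    using sum.subset_diff[OF JK fK, of "fibc f S"] by (simp add: add.commute)
  have geJ: "(\<Sum>k\<in>J. fibc f S k) \<ge> card J"
    using sum_mono[of J "\<lambda>_. 1::nat" "fibc f S"] ge by simp
  have "card S \<le> card J" using SJ fJ card_mono by blast
  then have cSJ: "card S = card J" using tot split geJ by linarith
  then show "S = J" using SJ fJ card_subset_eq by blast
  have z: "(\<Sum>k\<in>K-J. fibc f S k) = 0" using tot split geJ cSJ by linarith
  then show "\<forall>k\<in>K-J. fibc f S k = 0" using fK by simp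
  have "(\<Sum>k\<in>J. fibc f S k - 1) = (\<Sum>k\<in>J. fibc f S k) - (\<Sum>k\<in>J. 1)"
    using ge by (intro sum_subtractf_nat) auto
  also have "\<dots> = 0" using tot split z cSJ by simp
  finally have "\<forall>k\<in>J. fibc f S k - 1 = 0" using fJ by simp
  then show "\<forall>k\<in>J. fibc f S k = 1" using ge by fastforce
qed

lemma ev_nz: "ev A B c \<noteq> 0 \<longleftrightarrow> A = B \<and> (c \<longrightarrow> A \<noteq> 0)"
  by (auto simp: ev_def)

definition fibok :: "nat set \<Rightarrow> nat set \<Rightarrow> (nat \<Rightarrow> nat) \<Rightarrow> bool" where
  "fibok J K f \<longleftrightarrow> (\<forall>k\<in>K. fibc f J k = (if k \<in> J then 1 else 0))"

lemma prod_ev: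
  assumes JK: "J \<subseteq> K" and fK: "finite K" and SJ: "S \<subseteq> J" and f1: "f ` S \<subseteq> K" and g1: "g ` S \<subseteq> K"
  shows "(\<Prod>k\<in>K. ev (fibc f S k) (fibc g S k) (k \<in> J)) =
    (if S = J \<and> fibok J K f \<and> fibok J K g then (1/4)^card J else 0)"
proof (cases "S = J \<and> fibok J K f \<and> fibok J K g")
  case True
  have "(\<Prod>k\<in>K. ev (fibc f S k) (fibc g S k) (k \<in> J)) = (\<Prod>k\<in>K. if k \<in> J then 1/4 else 1)"
    using True by (intro prod.cong refl) (auto simp: fibok_def ev_def)
  also have "\<dots> = (1/4)^card J"
    using JK fK by (simp add: prod.If_cases Int_absorb1)
  finally show ?thesis using True by simp
next
  case False
  have "\<exists>k\<in>K. ev (fibc f S k) (fibc g S k) (k \<in> J) = 0"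
  proof (rule ccontr)
    assume "\<not> ?thesis"
    then have nz: "\<forall>k\<in>K. ev (fibc f S k) (fibc g S k) (k \<in> J) \<noteq> 0" by blast
    have eq: "\<forall>k\<in>K. fibc f S k = fibc g S k" and pos: "\<forall>k\<in>J. fibc f S k \<ge> 1"
      using nz JK unfolding ev_nz by auto
    have posg: "\<forall>k\<in>J. fibc g S k \<ge> 1" using pos eq JK by (metis subsetD)
    note kf = key[OF JK fK SJ f1 pos] and kg = key[OF JK fK SJ g1 posg]
    have "fibok J K f" using kf by (auto simp: fibok_def)
    moreover have "fibok J K g" using kg by (auto simp: fibok_def)
    ultimately show False using False kf by auto
  qed
  then have "(\<Prod>k\<in>K. ev (fibc f S k) (fibc g S k) (k \<in> J)) = 0" using fK by simp
  then show ?thesis using False by simp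
qed


lemma fibok_bij:
  assumes f: "f \<in> PiE J (\<lambda>_. K)" and JK: "J \<subseteq> K" and fJ: "finite J"
  shows "fibok J K f \<longleftrightarrow> bij_betw f J J"
proof
  assume ok: "fibok J K f"
  have fK: "f j \<in> K" if "j \<in> J" for j using f that by auto
  have inJ: "f j \<in> J" if j: "j \<in> J" for j
  proof (rule ccontr)
    assume "f j \<notin> J"
    then have "fibc f J (f j) = 0" using ok fK[OF j] by (auto simp: fibok_def)
    moreover have "j \<in> {i\<in>J. f i = f j}" using j by simp
    moreover have "finite {i\<in>J. f i = f j}" using fJ by simp
    ultimately show False unfolding fibc_def using card_0_eq by blast
  qed
  have inj: "inj_on f J"
  proof (rule inj_onI)
    fix a b assume a: "a \<in> J" and b: "b \<in> J" and e: "f a = f b"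
    have "card {i\<in>J. f i = f a} = 1" using ok inJ[OF a] JK by (auto simp: fibok_def fibc_def)
    moreover have "a \<in> {i\<in>J. f i = f a}" "b \<in> {i\<in>J. f i = f a}" using a b e by auto
    ultimately show "a = b" by (metis card_1_singletonE singletonD)
  qed
  have "f ` J = J"
    using inj inJ fJ by (metis card_image card_subset_eq image_subsetI)
  then show "bij_betw f J J" using inj by (simp add: bij_betw_def)
next
  assume b: "bij_betw f J J"
  show "fibok J K f" unfolding fibok_def
  proof
    fix k assume k: "k \<in> K"
    show "fibc f J k = (if k \<in> J then 1 else 0)"
    proof (cases "k \<in> J")
      case True
      then obtain j where j: "j \<in> J" "f j = k" using b by (metis bij_betw_def imageE)
      have "{i\<in>J. f i = k} = {j}"
        using j b by (auto simp: bij_betw_def inj_on_def)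
      then show ?thesis using True by (simp add: fibc_def)
    next
      case False
      have "{i\<in>J. f i = k} = {}" using False b by (auto simp: bij_betw_def)
      then show ?thesis using False unfolding fibc_def by (metis card.empty)
    qed
  qed
qed

lemma perm_link:
  assumes JK: "J \<subseteq> K" and fJ: "finite J"
  shows "(\<Sum>f\<in>{f\<in>PiE J (\<lambda>_. K). fibok J K f}. \<Prod>j\<in>J. U (f j) j) = (\<Sum>\<sigma>\<in>{\<sigma>. \<sigma> permutes J}. \<Prod>j\<in>J. U j (\<sigma> j))"
proof -
  have Fb: "{f\<in>PiE J (\<lambda>_. K). fibok J K f} = (\<lambda>\<sigma>. restrict \<sigma> J) ` {\<sigma>. \<sigma> permutes J}"
  proof (intro equalityI subsetI)
    fix f assume "f \<in> {f\<in>PiE J (\<lambda>_. K). fibok J K f}"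
    then have fP: "f \<in> PiE J (\<lambda>_. K)" and bj: "bij_betw f J J" using fibok_bij[OF _ JK fJ] by auto
    define \<sigma> where "\<sigma> x = (if x \<in> J then f x else x)" for x
    have "bij_betw \<sigma> J J" using bj by (rule bij_betw_cong[THEN iffD1, rotated]) (simp add: \<sigma>_def)
    then have sp: "\<sigma> permutes J" by (rule bij_imp_permutes) (simp add: \<sigma>_def)
    have "restrict \<sigma> J = f" using fP by (auto simp: \<sigma>_def restrict_def PiE_def extensional_def fun_eq_iff)
    then show "f \<in> (\<lambda>\<sigma>. restrict \<sigma> J) ` {\<sigma>. \<sigma> permutes J}" using sp by blast
  next
    fix f assume "f \<in> (\<lambda>\<sigma>. restrict \<sigma> J) ` {\<sigma>. \<sigma> permutes J}"
    then obtain \<sigma> where sp: "\<sigma> permutes J" and f: "f = restrict \<sigma> J" by auto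
    have fP: "f \<in> PiE J (\<lambda>_. K)" using sp JK f by (auto simp: permutes_in_image)
    have "bij_betw \<sigma> J J" using sp by (rule permutes_imp_bij)
    then have "bij_betw f J J" unfolding f by (rule bij_betw_cong[THEN iffD1, rotated]) simp
    then show "f \<in> {f\<in>PiE J (\<lambda>_. K). fibok J K f}" using fP fibok_bij[OF fP JK fJ] by simp
  qed
  have inj: "inj_on (\<lambda>\<sigma>. restrict \<sigma> J) {\<sigma>. \<sigma> permutes J}"
  proof (rule inj_onI)
    fix \<sigma> \<tau> assume s: "\<sigma> \<in> {\<sigma>. \<sigma> permutes J}" and t: "\<tau> \<in> {\<sigma>. \<sigma> permutes J}" and e: "restrict \<sigma> J = restrict \<tau> J"
    show "\<sigma> = \<tau>"
    proof
      fix x show "\<sigma> x = \<tau> x"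
      proof (cases "x \<in> J")
        case True then show ?thesis using e by (metis restrict_apply')
      next
        case False then show ?thesis using s t by (simp add: permutes_not_in)
      qed
    qed
  qed
  have "(\<Sum>f\<in>{f\<in>PiE J (\<lambda>_. K). fibok J K f}. \<Prod>j\<in>J. U (f j) j) = (\<Sum>\<sigma>\<in>{\<sigma>. \<sigma> permutes J}. \<Prod>j\<in>J. U (\<sigma> j) j)"
    unfolding Fb by (subst sum.reindex[OF inj]) (auto intro!: sum.cong prod.cong)
  also have "\<dots> = (\<Sum>\<sigma>\<in>{\<sigma>. \<sigma> permutes J}. \<Prod>j\<in>J. U (inv \<sigma> j) j)"
    by (rule sum_permutations_inverse)
  also have "\<dots> = (\<Sum>\<sigma>\<in>{\<sigma>. \<sigma> permutes J}. \<Prod>j\<in>J. U j (\<sigma> j))"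
  proof (rule sum.cong[OF refl])
    fix \<sigma> assume "\<sigma> \<in> {\<sigma>. \<sigma> permutes J}"
    then have sp: "\<sigma> permutes J" by simp
    have "(\<Prod>j\<in>J. U j (\<sigma> j)) = (\<Prod>j\<in>J. U (inv \<sigma> j) (\<sigma> (inv \<sigma> j)))"
      using prod.permute[OF permutes_inv[OF sp], of "\<lambda>j. U j (\<sigma> j)"] by (simp add: o_def)
    also have "\<dots> = (\<Prod>j\<in>J. U (inv \<sigma> j) j)" by (simp add: permutes_inverses[OF sp])
    finally show "(\<Prod>j\<in>J. U (inv \<sigma> j) j) = (\<Prod>j\<in>J. U j (\<sigma> j))" by simp
  qed
  finally show ?thesis .
qed


definition coef :: "nat set \<Rightarrow> (nat \<Rightarrow> nat \<Rightarrow> complex) \<Rightarrow> nat set \<Rightarrow> (nat \<Rightarrow> nat) \<Rightarrow> (nat \<Rightarrow> nat) \<Rightarrow> complex" where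
  "coef J U S f g = (-1)^card (J - S) * 4^card S * (\<Prod>j\<in>S. U (f j) j) * (\<Prod>j\<in>S. cnj (U (g j) j))"

lemma prod_fib:
  assumes "finite S" "finite K" "f ` S \<subseteq> K"
  shows "(\<Prod>j\<in>S. h (f j)) = (\<Prod>k\<in>K. h k ^ fibc f S k)"
proof -
  have "(\<Prod>j\<in>S. h (f j)) = (\<Prod>k\<in>K. \<Prod>j\<in>{x\<in>S. f x = k}. h (f j))"
    by (rule prod.group[symmetric, OF assms])
  also have "\<dots> = (\<Prod>k\<in>K. h k ^ fibc f S k)"
  proof (rule prod.cong[OF refl])
    fix k
    have "(\<Prod>j\<in>{x\<in>S. f x = k}. h (f j)) = (\<Prod>j\<in>{x\<in>S. f x = k}. h k)" by (rule prod.cong) auto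
    then show "(\<Prod>j\<in>{x\<in>S. f x = k}. h (f j)) = h k ^ fibc f S k" by (simp add: fibc_def)
  qed
  finally show ?thesis .
qed

lemma expand:
  fixes \<alpha> :: "nat \<Rightarrow> complex" and U :: "nat \<Rightarrow> nat \<Rightarrow> complex"
  assumes fK: "finite K" and JK: "J \<subseteq> K"
  shows "(\<Prod>k\<in>K. wt (\<alpha> k)) * (\<Prod>j\<in>J. 4 * (\<Sum>k\<in>K. \<alpha> k * U k j) * cnj (\<Sum>k\<in>K. \<alpha> k * U k j) - 1) * (\<Prod>j\<in>J. \<alpha> j * cnj (\<alpha> j) - 1/2)
   = (\<Sum>S\<in>Pow J. \<Sum>f\<in>PiE S (\<lambda>_. K). \<Sum>g\<in>PiE S (\<lambda>_. K). coef J U S f g * (\<Prod>k\<in>K. hfun (fibc f S k) (fibc g S k) (k \<in> J) (\<alpha> k)))"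
proof -
  have fJ: "finite J" using JK fK finite_subset by blast
  define W where "W = (\<Prod>k\<in>K. wt (\<alpha> k))"
  define LL where "LL = (\<Prod>j\<in>J. \<alpha> j * cnj (\<alpha> j) - 1/2)"
  define \<beta> where "\<beta> j = (\<Sum>k\<in>K. \<alpha> k * U k j)" for j
  have fS: "finite S" if "S \<in> Pow J" for S using that fJ finite_subset by auto
  have b1: "(\<Prod>j\<in>S. \<beta> j) = (\<Sum>f\<in>PiE S (\<lambda>_. K). (\<Prod>j\<in>S. \<alpha> (f j)) * (\<Prod>j\<in>S. U (f j) j))" if "finite S" for S
    unfolding \<beta>_def using that fK by (subst prod_sum_PiE) (auto simp: prod.distrib)
  have b2: "(\<Prod>j\<in>S. cnj (\<beta> j)) = (\<Sum>g\<in>PiE S (\<lambda>_. K). (\<Prod>j\<in>S. cnj (\<alpha> (g j))) * (\<Prod>j\<in>S. cnj (U (g j) j)))" if "finite S" for S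
    unfolding \<beta>_def cnj_sum complex_cnj_mult using that fK by (subst prod_sum_PiE) (auto simp: prod.distrib)
  have "(\<Prod>j\<in>J. 4 * \<beta> j * cnj (\<beta> j) - 1) = (\<Sum>S\<in>Pow J. (\<Prod>j\<in>S. 4 * \<beta> j * cnj (\<beta> j)) * (\<Prod>j\<in>J-S. - 1))"
    unfolding diff_conv_add_uminus by (rule prod_add[OF fJ])
  also have "\<dots> = (\<Sum>S\<in>Pow J. (-1)^card (J - S) * 4^card S * ((\<Prod>j\<in>S. \<beta> j) * (\<Prod>j\<in>S. cnj (\<beta> j))))"
    by (intro sum.cong refl) (simp add: prod.distrib mult_ac)
  finally have P: "(\<Prod>j\<in>J. 4 * \<beta> j * cnj (\<beta> j) - 1) = \<dots>" .
  have LHS: "W * (\<Prod>j\<in>J. 4 * \<beta> j * cnj (\<beta> j) - 1) * LL =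
    (\<Sum>S\<in>Pow J. \<Sum>f\<in>PiE S (\<lambda>_. K). \<Sum>g\<in>PiE S (\<lambda>_. K). coef J U S f g *
       (W * (\<Prod>j\<in>S. \<alpha> (f j)) * (\<Prod>j\<in>S. cnj (\<alpha> (g j))) * LL))"
    unfolding P sum_distrib_right sum_distrib_left
  proof (intro sum.cong refl)
    fix S assume S: "S \<in> Pow J"
    show "W * ((-1)^card (J - S) * 4^card S * ((\<Prod>j\<in>S. \<beta> j) * (\<Prod>j\<in>S. cnj (\<beta> j)))) * LL =
       (\<Sum>f\<in>PiE S (\<lambda>_. K). \<Sum>g\<in>PiE S (\<lambda>_. K). coef J U S f g * (W * (\<Prod>j\<in>S. \<alpha> (f j)) * (\<Prod>j\<in>S. cnj (\<alpha> (g j))) * LL))"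
      unfolding b1[OF fS[OF S]] b2[OF fS[OF S]] sum_product unfolding sum_distrib_right sum_distrib_left
      by (intro sum.cong refl) (simp only: coef_def mult_ac)
  qed
  have T: "W * (\<Prod>j\<in>S. \<alpha> (f j)) * (\<Prod>j\<in>S. cnj (\<alpha> (g j))) * LL = (\<Prod>k\<in>K. hfun (fibc f S k) (fibc g S k) (k \<in> J) (\<alpha> k))"
    if S: "S \<in> Pow J" and f: "f \<in> PiE S (\<lambda>_. K)" and g: "g \<in> PiE S (\<lambda>_. K)" for S f g
  proof -
    have f1: "f ` S \<subseteq> K" "g ` S \<subseteq> K" using f g by auto
    have "LL = (\<Prod>k\<in>K. if k \<in> J then \<alpha> k * cnj (\<alpha> k) - 1/2 else 1)"
      unfolding LL_def using fK JK by (simp add: prod.If_cases Int_absorb1)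
    then show ?thesis
      unfolding W_def prod_fib[OF fS[OF S] fK f1(1), of \<alpha>] prod_fib[OF fS[OF S] fK f1(2), of "\<lambda>k. cnj (\<alpha> k)"] hfun_def
      by (simp add: prod.distrib)
  qed
  show ?thesis
    unfolding W_def[symmetric] LL_def[symmetric] \<beta>_def[symmetric] LHS
    by (intro sum.cong refl) (simp add: T)
qed


theorem mainTheorem1:
  fixes n m :: nat and U :: "nat \<Rightarrow> nat \<Rightarrow> complex"
  assumes "1 \<le> n" and "n \<le> m" and "unitary_mat m U"
  shows "(2 / pi) ^ m *
    (\<integral>\<alpha>. exp (- 2 * (\<Sum>k=1..m. (cmod (\<alpha> k))\<^sup>2)) *
          (\<Prod>j=1..n. 4 * (cmod (\<Sum>k=1..m. \<alpha> k * U k j))\<^sup>2 - 1) *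
          (\<Prod>j=1..n. (cmod (\<alpha> j))\<^sup>2 - 1 / 2)
      \<partial>(PiM {1..m} (\<lambda>_. (lborel :: complex measure))))
    = (cmod (perm_sub n U))\<^sup>2"
proof -
  define J where "J = {1..n}"
  define K where "K = {1..m}"
  have fK: "finite K" and fJ: "finite J" and JK: "J \<subseteq> K" and cK: "card K = m" and cJ: "card J = n"
    using assms(2) by (auto simp: J_def K_def)
  interpret product_sigma_finite "\<lambda>_::nat. lborel :: complex measure" by (rule psf)
  define M where "M = PiM K (\<lambda>_::nat. lborel :: complex measure)"
  define F where "F \<alpha> = exp (- 2 * (\<Sum>k\<in>K. (cmod (\<alpha> k))\<^sup>2)) *
          (\<Prod>j\<in>J. 4 * (cmod (\<Sum>k\<in>K. \<alpha> k * U k j))\<^sup>2 - 1) *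
          (\<Prod>j\<in>J. (cmod (\<alpha> j))\<^sup>2 - 1 / 2)" for \<alpha> :: "nat \<Rightarrow> complex"
  define T where "T S f g \<alpha> = coef J U S f g * (\<Prod>k\<in>K. hfun (fibc f S k) (fibc g S k) (k \<in> J) (\<alpha> k))"
    for S f g and \<alpha> :: "nat \<Rightarrow> complex"
  have pw: "complex_of_real ((2/pi)^m * F \<alpha>) = (\<Sum>S\<in>Pow J. \<Sum>f\<in>PiE S (\<lambda>_. K). \<Sum>g\<in>PiE S (\<lambda>_. K). T S f g \<alpha>)" for \<alpha>
  proof -
    have w: "complex_of_real ((2/pi)^m * exp (- 2 * (\<Sum>k\<in>K. (cmod (\<alpha> k))\<^sup>2))) = (\<Prod>k\<in>K. wt (\<alpha> k))"
    proof -
      have "(2/pi)^m * exp (- 2 * (\<Sum>k\<in>K. (cmod (\<alpha> k))\<^sup>2)) = (\<Prod>k\<in>K. (2/pi) * exp (-2 * (cmod (\<alpha> k))\<^sup>2))"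
      proof -
        have "(\<Prod>k\<in>K. (2/pi) * exp (-2 * (cmod (\<alpha> k))\<^sup>2)) = (2/pi)^m * (\<Prod>k\<in>K. exp (-2 * (cmod (\<alpha> k))\<^sup>2))"
          by (simp only: prod.distrib prod_constant cK)
        moreover have "(\<Prod>k\<in>K. exp (-2 * (cmod (\<alpha> k))\<^sup>2)) = exp (- 2 * (\<Sum>k\<in>K. (cmod (\<alpha> k))\<^sup>2))"
          by (simp only: exp_sum[OF fK] sum_distrib_left)
        ultimately show ?thesis by simp
      qed
      then show ?thesis unfolding wt_def by simp
    qed
    have p1: "complex_of_real (\<Prod>j\<in>J. 4 * (cmod (\<Sum>k\<in>K. \<alpha> k * U k j))\<^sup>2 - 1) =
       (\<Prod>j\<in>J. 4 * (\<Sum>k\<in>K. \<alpha> k * U k j) * cnj (\<Sum>k\<in>K. \<alpha> k * U k j) - 1)"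
      by (simp only: of_real_prod of_real_diff of_real_mult complex_norm_square of_real_1 of_real_numeral mult.assoc)
    have p2: "complex_of_real (\<Prod>j\<in>J. (cmod (\<alpha> j))\<^sup>2 - 1 / 2) = (\<Prod>j\<in>J. \<alpha> j * cnj (\<alpha> j) - 1/2)"
      by (simp only: of_real_prod of_real_diff of_real_divide complex_norm_square of_real_1 of_real_numeral)
    have "complex_of_real ((2/pi)^m * F \<alpha>) = complex_of_real ((2/pi)^m * exp (- 2 * (\<Sum>k\<in>K. (cmod (\<alpha> k))\<^sup>2))) *
       complex_of_real (\<Prod>j\<in>J. 4 * (cmod (\<Sum>k\<in>K. \<alpha> k * U k j))\<^sup>2 - 1) * complex_of_real (\<Prod>j\<in>J. (cmod (\<alpha> j))\<^sup>2 - 1 / 2)"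
      unfolding F_def by (simp only: of_real_mult mult.assoc)
    also have "\<dots> = (\<Sum>S\<in>Pow J. \<Sum>f\<in>PiE S (\<lambda>_. K). \<Sum>g\<in>PiE S (\<lambda>_. K). T S f g \<alpha>)"
      unfolding w p1 p2 T_def by (rule expand[OF fK JK])
    finally show ?thesis .
  qed
  have intT: "integrable M (T S f g)" for S f g
    unfolding T_def[abs_def] M_def
    by (intro integrable_mult_right product_integrable_prod fK hfun_int)
  have intgT: "integral\<^sup>L M (T S f g) = coef J U S f g * (\<Prod>k\<in>K. ev (fibc f S k) (fibc g S k) (k \<in> J))" for S f g
    unfolding T_def[abs_def] M_def integral_mult_right_zero
    by (subst product_integral_prod[OF fK]) (auto intro: hfun_int simp: hfun_integral)
  define Fb where "Fb = {f\<in>PiE J (\<lambda>_. K). fibok J K f}"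
  define p where "p = (\<Sum>f\<in>Fb. \<Prod>j\<in>J. U (f j) j)"
  have pp: "p = perm_sub n U"
  proof -
    have "p = (\<Sum>\<sigma>\<in>{\<sigma>. \<sigma> permutes J}. \<Prod>j\<in>J. U j (\<sigma> j))"
      unfolding p_def Fb_def by (rule perm_link[OF JK fJ])
    then show ?thesis by (simp add: perm_sub_def J_def)
  qed
  have "complex_of_real ((2/pi)^m * integral\<^sup>L M F) = integral\<^sup>L M (\<lambda>\<alpha>. complex_of_real ((2/pi)^m * F \<alpha>))"
    by simp
  also have "\<dots> = integral\<^sup>L M (\<lambda>\<alpha>. \<Sum>S\<in>Pow J. \<Sum>f\<in>PiE S (\<lambda>_. K). \<Sum>g\<in>PiE S (\<lambda>_. K). T S f g \<alpha>)"
    by (simp only: pw)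
  also have "\<dots> = (\<Sum>S\<in>Pow J. integral\<^sup>L M (\<lambda>\<alpha>. \<Sum>f\<in>PiE S (\<lambda>_. K). \<Sum>g\<in>PiE S (\<lambda>_. K). T S f g \<alpha>))"
    by (rule Bochner_Integration.integral_sum) (intro Bochner_Integration.integrable_sum intT)
  also have "\<dots> = (\<Sum>S\<in>Pow J. \<Sum>f\<in>PiE S (\<lambda>_. K). integral\<^sup>L M (\<lambda>\<alpha>. \<Sum>g\<in>PiE S (\<lambda>_. K). T S f g \<alpha>))"
    by (intro sum.cong refl Bochner_Integration.integral_sum Bochner_Integration.integrable_sum intT)
  also have "\<dots> = (\<Sum>S\<in>Pow J. \<Sum>f\<in>PiE S (\<lambda>_. K). \<Sum>g\<in>PiE S (\<lambda>_. K). integral\<^sup>L M (T S f g))"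
    by (intro sum.cong refl Bochner_Integration.integral_sum intT)
  also have "\<dots> = (\<Sum>S\<in>Pow J. \<Sum>f\<in>PiE S (\<lambda>_. K). \<Sum>g\<in>PiE S (\<lambda>_. K).
      coef J U S f g * (if S = J \<and> fibok J K f \<and> fibok J K g then (1/4)^card J else 0))"
  proof (intro sum.cong refl)
    fix S f g assume S: "S \<in> Pow J" and f: "f \<in> PiE S (\<lambda>_. K)" and g: "g \<in> PiE S (\<lambda>_. K)"
    show "integral\<^sup>L M (T S f g) = coef J U S f g * (if S = J \<and> fibok J K f \<and> fibok J K g then (1/4)^card J else 0)"
      unfolding intgT using S f g by (subst prod_ev[OF JK fK]) auto
  qed
  also have "\<dots> = (\<Sum>S\<in>{J}. \<Sum>f\<in>PiE S (\<lambda>_. K). \<Sum>g\<in>PiE S (\<lambda>_. K).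
      coef J U S f g * (if S = J \<and> fibok J K f \<and> fibok J K g then (1/4)^card J else 0))"
    using fJ by (intro sum.mono_neutral_right) auto
  also have "\<dots> = (\<Sum>f\<in>PiE J (\<lambda>_. K). (if fibok J K f then (\<Sum>g\<in>PiE J (\<lambda>_. K).
      (if fibok J K g then (\<Prod>j\<in>J. U (f j) j) * (\<Prod>j\<in>J. cnj (U (g j) j)) else 0)) else 0))"
  proof -
    have q: "(4::complex)^card J * (1/4)^card J = 1" by (simp flip: power_mult_distrib)
    have e: "coef J U J f g * (1/4)^card J = (\<Prod>j\<in>J. U (f j) j) * (\<Prod>j\<in>J. cnj (U (g j) j))" for f g
    proof -
      have "coef J U J f g * (1/4)^card J = ((4::complex)^card J * (1/4)^card J) * ((\<Prod>j\<in>J. U (f j) j) * (\<Prod>j\<in>J. cnj (U (g j) j)))"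
        by (simp add: coef_def mult_ac)
      then show ?thesis unfolding q by simp
    qed
    show ?thesis
      by (simp only: sum.insert finite.emptyI empty_iff sum.empty add_0_right simp_thms)
         (intro sum.cong refl, (case_tac "fibok J K x"; auto simp: e intro!: sum.cong))
  qed
  also have "\<dots> = (\<Sum>f\<in>Fb. \<Sum>g\<in>Fb. (\<Prod>j\<in>J. U (f j) j) * (\<Prod>j\<in>J. cnj (U (g j) j)))"
  proof -
    have fP: "finite (PiE J (\<lambda>_. K))" using fJ fK by (simp add: finite_PiE)
    have "(\<Sum>f\<in>PiE J (\<lambda>_. K). (if fibok J K f then (\<Sum>g\<in>PiE J (\<lambda>_. K).
      (if fibok J K g then (\<Prod>j\<in>J. U (f j) j) * (\<Prod>j\<in>J. cnj (U (g j) j)) else 0)) else 0))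
      = (\<Sum>f\<in>Fb. \<Sum>g\<in>PiE J (\<lambda>_. K). (if fibok J K g then (\<Prod>j\<in>J. U (f j) j) * (\<Prod>j\<in>J. cnj (U (g j) j)) else 0))"
      unfolding Fb_def by (rule sum.inter_filter[OF fP, symmetric])
    also have "\<dots> = (\<Sum>f\<in>Fb. \<Sum>g\<in>Fb. (\<Prod>j\<in>J. U (f j) j) * (\<Prod>j\<in>J. cnj (U (g j) j)))"
      unfolding Fb_def by (intro sum.cong refl sum.inter_filter[OF fP, symmetric])
    finally show ?thesis .
  qed
  also have "\<dots> = p * cnj p"
    unfolding p_def cnj_sum cnj_prod sum_product ..
  also have "\<dots> = complex_of_real ((cmod p)\<^sup>2)"
    by (rule complex_norm_square[symmetric])
  finally have "(2/pi)^m * integral\<^sup>L M F = (cmod p)\<^sup>2"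
    using of_real_eq_iff by blast
  then show ?thesis unfolding pp M_def F_def J_def K_def .
qed


end
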